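(* Let $T$ be a tree on $n\geq 3$ vertices whose vertex degrees are $\Delta=d_1\geq d_2\geq\cdots\geq d_n$. Then $$\mathcal{E}(T)\leq \sum_{i=2}^n 2\sqrt{d_i-1}+2\sqrt{\Delta}\leq \sum_{i=1}^n 2\sqrt{d_i-1}+1.$$
   Context: For a finite simple graph $G$ with adjacency matrix $A(G)$ having eigenvalues $\lambda_1,\dots,\lambda_n$, the energy of $G$ is $\mathcal{E}(G)=\sum_{i=1}^n|\lambda_i|$. *)

theory Defs
  imports "Jordan_Normal_Form.Char_Poly" "HOL-Computational_Algebra.Fundamental_Theorem_Algebra"
begin

definition simple_graph :: "nat \<Rightarrow> (nat \<Rightarrow> nat \<Rightarrow> bool) \<Rightarrow> bool" where
  "simple_graph n E \<longleftrightarrow>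
     (\<forall>u v. E u v \<longrightarrow> u < n \<and> v < n) \<and> (\<forall>u v. E u v \<longrightarrow> E v u) \<and> (\<forall>u. \<not> E u u)"

definition edge_set :: "nat \<Rightarrow> (nat \<Rightarrow> nat \<Rightarrow> bool) \<Rightarrow> nat set set" where
  "edge_set n E = {{u, v} | u v. u < n \<and> v < n \<and> E u v}"

definition connected_graph :: "nat \<Rightarrow> (nat \<Rightarrow> nat \<Rightarrow> bool) \<Rightarrow> bool" where
  "connected_graph n E \<longleftrightarrow> (\<forall>u<n. \<forall>v<n. E\<^sup>*\<^sup>* u v)"

definition is_tree :: "nat \<Rightarrow> (nat \<Rightarrow> nat \<Rightarrow> bool) \<Rightarrow> bool" where
  "is_tree n E \<longleftrightarrow> simple_graph n E \<and> connected_graph n E \<and> card (edge_set n E) = n - 1"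

definition degree_of :: "nat \<Rightarrow> (nat \<Rightarrow> nat \<Rightarrow> bool) \<Rightarrow> nat \<Rightarrow> nat" where
  "degree_of n E v = card {u. u < n \<and> E v u}"

definition adjacency_matrix :: "nat \<Rightarrow> (nat \<Rightarrow> nat \<Rightarrow> bool) \<Rightarrow> real mat" where
  "adjacency_matrix n E = mat n n (\<lambda>(i, j). if E i j then 1 else 0)"

definition eigenvalues_mset :: "real mat \<Rightarrow> complex multiset" where
  "eigenvalues_mset A = proots (char_poly (map_mat complex_of_real A))"

definition graph_energy :: "nat \<Rightarrow> (nat \<Rightarrow> nat \<Rightarrow> bool) \<Rightarrow> real" where
  "graph_energy n E = (\<Sum>x\<in>#eigenvalues_mset (adjacency_matrix n E). cmod x)"

end

theory Submission
  imports Defs "Jordan_Normal_Form.Schur_Decomposition"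
begin


lemma real_eigenvalue_exists:
  fixes A :: "real mat"
  assumes A: "A \<in> carrier_mat n n" and sym: "transpose_mat A = A" and n: "n > 0"
  shows "\<exists>r. eigenvalue A r"
proof -
  define Ac where "Ac = map_mat complex_of_real A"
  have Ac: "Ac \<in> carrier_mat n n" using A by (simp add: Ac_def)
  have cp: "char_poly Ac = map_poly complex_of_real (char_poly A)"
    unfolding Ac_def by (rule of_real_hom.char_poly_hom[OF A])
  have "degree (char_poly Ac) = n" using degree_monic_char_poly[OF Ac] by simp
  hence "\<not> constant (poly (char_poly Ac))" using n by (simp add: constant_degree)
  then obtain z where z: "poly (char_poly Ac) z = 0" using fundamental_theorem_of_algebra by blast
  hence "eigenvalue Ac z" using eigenvalue_root_char_poly[OF Ac] by simp
  from find_eigenvector[OF Ac this] obtain v where ev: "eigenvector Ac v z" by blast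
  hence v: "v \<in> carrier_vec n" and v0: "v \<noteq> 0\<^sub>v n" and Av: "Ac *\<^sub>v v = z \<cdot>\<^sub>v v"
    using Ac unfolding eigenvector_def by auto
  have symA: "\<And>i j. i < n \<Longrightarrow> j < n \<Longrightarrow> A $$ (i,j) = A $$ (j,i)"
    using sym A by (metis carrier_matD index_transpose_mat(1))
  define s where "s = (\<Sum>i<n. cnj (v $ i) * (\<Sum>j<n. Ac $$ (i,j) * v $ j))"
  define t where "t = (\<Sum>i<n. cnj (v $ i) * v $ i)"
  have "\<And>i. i < n \<Longrightarrow> (\<Sum>j<n. Ac $$ (i,j) * v $ j) = z * v $ i"
  proof -
    fix i assume i: "i < n"
    have "(Ac *\<^sub>v v) $ i = z * v $ i" using Av i v by simp
    moreover have "(Ac *\<^sub>v v) $ i = (\<Sum>j<n. Ac $$ (i,j) * v $ j)"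
      using i Ac v by (auto simp: scalar_prod_def lessThan_atLeast0)
    ultimately show "(\<Sum>j<n. Ac $$ (i,j) * v $ j) = z * v $ i" by simp
  qed
  hence st: "s = z * t" unfolding s_def t_def by (simp add: sum_distrib_left mult_ac)
  have "cnj s = (\<Sum>i<n. \<Sum>j<n. v $ i * (Ac $$ (i,j) * cnj (v $ j)))"
    unfolding s_def Ac_def using A by (auto simp: sum_distrib_left intro!: sum.cong)
  also have "\<dots> = (\<Sum>j<n. \<Sum>i<n. v $ i * (Ac $$ (i,j) * cnj (v $ j)))" by (rule sum.swap)
  also have "\<dots> = s" unfolding s_def Ac_def using A
    by (auto simp: sum_distrib_left mult_ac intro!: sum.cong dest: symA)
  finally have "cnj s = s" .
  hence sreal: "Im s = 0" by (metis Reals_cnj_iff complex_is_Real_iff)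
  have treal: "t = of_real (\<Sum>i<n. (cmod (v $ i))^2)" unfolding t_def
    by (simp add: complex_mult_cnj mult.commute cmod_power2 sum.distrib)
  have "\<exists>i<n. v $ i \<noteq> 0" using v v0 by (metis carrier_vecD eq_vecI index_zero_vec)
  then obtain i where i: "i < n" "v $ i \<noteq> 0" by blast
  have "(\<Sum>i<n. (cmod (v $ i))^2) > 0"
    by (rule sum_pos2[of _ i]) (use i in auto)
  hence tpos: "Re t > 0" "Im t = 0" using treal by auto
  have "Im z = 0"
  proof -
    have "Im s = Re z * Im t + Im z * Re t" using st by simp
    thus ?thesis using sreal tpos by simp
  qed
  hence zr: "z = of_real (Re z)" by (simp add: complex_eq_iff)
  have "poly (char_poly A) (Re z) = 0"
    using z unfolding cp by (subst (asm) zr, simp only: of_real_hom.poly_map_poly) simp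
  thus ?thesis using eigenvalue_root_char_poly[OF A] by blast
qed

lemma conjugate_real_vec[simp]: "conjugate (w :: real vec) = w"
  unfolding conjugate_vec_def by (intro eq_vecI) auto

lemma self_sprod_real_nonneg: "(w :: real vec) \<bullet> w \<ge> 0"
  unfolding scalar_prod_def by (intro sum_nonneg) auto

lemma spectral_real:
  fixes A :: "real mat"
  assumes "A \<in> carrier_mat n n" "transpose_mat A = A"
  shows "\<exists>Q D. Q \<in> carrier_mat n n \<and> D \<in> carrier_mat n n \<and> diagonal_mat D \<and>
     transpose_mat Q * Q = 1\<^sub>m n \<and> A = Q * D * transpose_mat Q"
  using assms
proof (induction n arbitrary: A)
  case 0
  then show ?case
    by (intro exI[of _ "1\<^sub>m 0"] exI[of _ A]) (auto simp: diagonal_mat_def)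
next
  case (Suc m)
  define n where "n = Suc m"
  have A: "A \<in> carrier_mat n n" and sym: "transpose_mat A = A" using Suc.prems n_def by auto
  obtain r where "eigenvalue A r" using real_eigenvalue_exists[OF A sym] n_def by auto
  from find_eigenvector[OF A this] obtain v0 where "eigenvector A v0 r" by blast
  hence v0: "v0 \<in> carrier_vec n" and v00: "v0 \<noteq> 0\<^sub>v n" and Av0: "A *\<^sub>v v0 = r \<cdot>\<^sub>v v0"
    using A unfolding eigenvector_def by auto
  have "v0 \<bullet> v0 \<noteq> 0"
    using v0 v00 conjugate_square_eq_0_vec[of v0 n] by simp
  hence v0pos: "v0 \<bullet> v0 > 0" using self_sprod_real_nonneg[of v0] by linarith
  define u where "u = (1 / sqrt (v0 \<bullet> v0)) \<cdot>\<^sub>v v0"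
  have u: "u \<in> carrier_vec n" using v0 by (simp add: u_def)
  have uu: "u \<bullet> u = 1" using v0 v0pos
    by (simp add: u_def smult_scalar_prod_distrib scalar_prod_smult_distrib)
  hence u0: "u \<noteq> 0\<^sub>v n" by auto
  have Au: "A *\<^sub>v u = r \<cdot>\<^sub>v u"
    using A v0 Av0 by (simp add: u_def mult_mat_vec smult_smult_assoc mult.commute)
  interpret cof_vec_space n "TYPE(real)" .
  define b where "b = basis_completion u"
  note bc = basis_completion[OF u u0, folded b_def]
  from bc obtain vs where bv: "b = u # vs" using n_def by (cases b) auto
  define ws where "ws = gram_schmidt n b"
  from gram_schmidt_result[OF bc(2) bc(4) bc(5) ws_def]
  have ws: "corthogonal ws" "set ws \<subseteq> carrier_vec n" "length ws = n"
    using bc by auto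
  have hdws: "hd ws = u" unfolding ws_def bv using u by simp
  define us where "us = map (\<lambda>w. (1 / sqrt (w \<bullet> w)) \<cdot>\<^sub>v w) ws"
  have us_len: "length us = n" using ws by (simp add: us_def)
  have us_car: "\<And>i. i < n \<Longrightarrow> us ! i \<in> carrier_vec n"
    using ws by (auto simp: us_def)
  have wspos: "\<And>i. i < n \<Longrightarrow> ws ! i \<bullet> ws ! i > 0"
  proof -
    fix i assume i: "i < n"
    have "ws ! i \<bullet> ws ! i \<noteq> 0" using corthogonalD[OF ws(1), of i i] i ws(3) by simp
    thus "ws ! i \<bullet> ws ! i > 0" using self_sprod_real_nonneg[of "ws ! i"] by linarith
  qed
  have orth: "\<And>i j. i < n \<Longrightarrow> j < n \<Longrightarrow> us ! i \<bullet> us ! j = (if i = j then 1 else 0)"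
  proof -
    fix i j assume i: "i < n" and j: "j < n"
    have wi: "ws ! i \<in> carrier_vec n" and wj: "ws ! j \<in> carrier_vec n" using ws i j by auto
    have "us ! i \<bullet> us ! j = (1 / sqrt (ws ! i \<bullet> ws ! i)) * (1 / sqrt (ws ! j \<bullet> ws ! j)) * (ws ! i \<bullet> ws ! j)"
      using i j ws wi wj by (simp add: us_def smult_scalar_prod_distrib scalar_prod_smult_distrib)
    also have "\<dots> = (if i = j then 1 else 0)"
    proof (cases "i = j")
      case True
      then show ?thesis using wspos[OF i] by (simp add: field_simps)
    next
      case False
      then show ?thesis using corthogonalD[OF ws(1), of i j] i j ws(3) by simp
    qed
    finally show "us ! i \<bullet> us ! j = (if i = j then 1 else 0)" .
  qed
  have us0: "us ! 0 = u"
  proof -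
    have "ws ! 0 = u" using hdws ws(3) n_def by (cases ws) auto
    thus ?thesis using uu ws(3) n_def by (simp add: us_def)
  qed
  define W where "W = mat_of_cols n us"
  have W: "W \<in> carrier_mat n n" unfolding W_def using mat_of_cols_carrier(1)[of n us] us_len by simp
  have colW: "\<And>j. j < n \<Longrightarrow> col W j = us ! j" unfolding W_def using us_len us_car by simp
  have WtW: "transpose_mat W * W = 1\<^sub>m n"
    by (rule eq_matI) (use W in \<open>auto simp: colW orth\<close>)
  have WWt: "W * transpose_mat W = 1\<^sub>m n"
    by (rule mat_mult_left_right_inverse[OF _ W WtW]) (use W in simp)
  define A' where "A' = transpose_mat W * (A * W)"
  have A': "A' \<in> carrier_mat n n" using A W by (simp add: A'_def)
  have A'_idx: "\<And>i j. i < n \<Longrightarrow> j < n \<Longrightarrow> A' $$ (i,j) = us ! i \<bullet> (A *\<^sub>v us ! j)"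
  proof -
    fix i j assume i: "i < n" and j: "j < n"
    have "A' $$ (i,j) = row (transpose_mat W) i \<bullet> col (A * W) j"
      using A W i j by (simp add: A'_def)
    also have "\<dots> = us ! i \<bullet> (A *\<^sub>v us ! j)"
      using A W i j by (simp add: colW mult_mat_vec_def)
    finally show "A' $$ (i,j) = us ! i \<bullet> (A *\<^sub>v us ! j)" .
  qed
  have A'_col0: "\<And>i. i < n \<Longrightarrow> A' $$ (i,0) = (if i = 0 then r else 0)"
  proof -
    fix i assume i: "i < n"
    have "A' $$ (i,0) = us ! i \<bullet> (r \<cdot>\<^sub>v u)" using A'_idx[OF i] n_def us0 Au by simp
    also have "\<dots> = r * (us ! i \<bullet> us ! 0)" using us_car[OF i] u us0
      by (simp add: scalar_prod_smult_distrib)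
    finally show "A' $$ (i,0) = (if i = 0 then r else 0)" using orth[OF i, of 0] n_def by simp
  qed
  have A'sym: "transpose_mat A' = A'"
  proof -
    have "transpose_mat A' = transpose_mat (A * W) * W"
      unfolding A'_def using A W by (subst transpose_mult[of _ n n]) auto
    also have "\<dots> = (transpose_mat W * transpose_mat A) * W"
      using A W by (subst transpose_mult[of _ n n]) auto
    also have "\<dots> = A'" unfolding A'_def using A W sym by (simp add: assoc_mult_mat[of _ n n _ n _ n])
    finally show ?thesis .
  qed
  have A'symi: "\<And>i j. i < n \<Longrightarrow> j < n \<Longrightarrow> A' $$ (i,j) = A' $$ (j,i)"
    using A'sym A' by (metis carrier_matD index_transpose_mat(1))
  define A3 where "A3 = mat m m (\<lambda>(i,j). A' $$ (Suc i, Suc j))"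
  have A3: "A3 \<in> carrier_mat m m" by (simp add: A3_def)
  have A3sym: "transpose_mat A3 = A3"
    by (rule eq_matI) (auto simp: A3_def n_def intro: A'symi)
  from Suc.IH[OF A3 A3sym] obtain Q3 D3 where Q3: "Q3 \<in> carrier_mat m m" and D3: "D3 \<in> carrier_mat m m"
    and D3d: "diagonal_mat D3" and Q3o: "transpose_mat Q3 * Q3 = 1\<^sub>m m"
    and A3eq: "A3 = Q3 * D3 * transpose_mat Q3" by blast
  define R1 where "R1 = mat 1 1 (\<lambda>_. r)"
  have R1: "R1 \<in> carrier_mat 1 1" by (simp add: R1_def)
  define B where "B = four_block_mat (1\<^sub>m 1) (0\<^sub>m 1 m) (0\<^sub>m m 1) Q3"
  define D where "D = four_block_mat R1 (0\<^sub>m 1 m) (0\<^sub>m m 1) D3"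
  have B: "B \<in> carrier_mat n n" using four_block_carrier_mat[OF one_carrier_mat[of 1] Q3] by (simp add: B_def n_def)
  have D: "D \<in> carrier_mat n n" using four_block_carrier_mat[OF R1 D3] by (simp add: D_def n_def)
  have Bt: "transpose_mat B = four_block_mat (1\<^sub>m 1) (0\<^sub>m 1 m) (0\<^sub>m m 1) (transpose_mat Q3)"
    unfolding B_def by (subst transpose_four_block_mat) (use Q3 in auto)
  have A'eq: "A' = four_block_mat R1 (0\<^sub>m 1 m) (0\<^sub>m m 1) A3"
  proof (rule eq_matI)
    fix i j assume i: "i < dim_row (four_block_mat R1 (0\<^sub>m 1 m) (0\<^sub>m m 1) A3)"
      and j: "j < dim_col (four_block_mat R1 (0\<^sub>m 1 m) (0\<^sub>m m 1) A3)"
    hence i': "i < n" and j': "j < n" using R1 A3 by (auto simp: n_def)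
    show "A' $$ (i, j) = four_block_mat R1 (0\<^sub>m 1 m) (0\<^sub>m m 1) A3 $$ (i, j)"
      using i j R1 A3 A'_col0[OF i'] A'_col0[OF j'] A'symi[OF i' j']
      by (cases i; cases j) (auto simp: R1_def A3_def)
  qed (use A' R1 A3 in \<open>auto simp: n_def\<close>)
  have BDBt: "B * D * transpose_mat B = A'"
  proof -
    have "B * D = four_block_mat R1 (0\<^sub>m 1 m) (0\<^sub>m m 1) (Q3 * D3)"
      unfolding B_def D_def using Q3 D3 R1
      by (subst mult_four_block_mat[OF one_carrier_mat zero_carrier_mat zero_carrier_mat Q3 R1 zero_carrier_mat zero_carrier_mat D3]) auto
    also have "\<dots> * transpose_mat B = four_block_mat R1 (0\<^sub>m 1 m) (0\<^sub>m m 1) (Q3 * D3 * transpose_mat Q3)"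
      unfolding Bt using Q3 D3 R1
      by (subst mult_four_block_mat[OF R1 zero_carrier_mat zero_carrier_mat mult_carrier_mat[OF Q3 D3] one_carrier_mat zero_carrier_mat zero_carrier_mat transpose_carrier_mat[THEN iffD2, OF Q3]]) auto
    finally show ?thesis using A'eq A3eq by simp
  qed
  have BtB: "transpose_mat B * B = 1\<^sub>m n"
    unfolding Bt unfolding B_def using Q3 Q3o
    by (subst mult_four_block_mat[OF one_carrier_mat zero_carrier_mat zero_carrier_mat transpose_carrier_mat[THEN iffD2, OF Q3] one_carrier_mat zero_carrier_mat zero_carrier_mat Q3]) (auto simp: n_def)
  define Q where "Q = W * B"
  have Q: "Q \<in> carrier_mat n n" using W B by (simp add: Q_def)
  have Qt: "transpose_mat Q = transpose_mat B * transpose_mat W"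
    unfolding Q_def using W B by (simp add: transpose_mult)
  have QtQ: "transpose_mat Q * Q = 1\<^sub>m n"
  proof -
    have "transpose_mat Q * Q = transpose_mat B * (transpose_mat W * W) * B"
      unfolding Qt unfolding Q_def using W B by (simp add: assoc_mult_mat[of _ n n _ n _ n])
    also have "\<dots> = 1\<^sub>m n" using WtW BtB B by simp
    finally show ?thesis .
  qed
  have AQ: "A = Q * D * transpose_mat Q"
  proof -
    have "Q * D * transpose_mat Q = W * (B * D * transpose_mat B) * transpose_mat W"
      unfolding Qt unfolding Q_def using W B D by (simp add: assoc_mult_mat[of _ n n _ n _ n])
    also have "\<dots> = W * A' * transpose_mat W" using BDBt by simp
    also have "\<dots> = (W * transpose_mat W) * A * (W * transpose_mat W)"
      unfolding A'_def using W A by (simp add: assoc_mult_mat[of _ n n _ n _ n])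
    also have "\<dots> = A" using WWt A by simp
    finally show ?thesis by simp
  qed
  have Dd: "diagonal_mat D"
    unfolding diagonal_mat_def D_def using D3d D3 R1
    by (auto simp: diagonal_mat_def)
  show ?case using Q D Dd QtQ AQ n_def by blast
qed


definition mtr :: "'a :: comm_ring_1 mat \<Rightarrow> 'a" where
  "mtr M = (\<Sum>i<dim_row M. M $$ (i,i))"

lemma mtr_comm:
  fixes X :: "'a :: comm_ring_1 mat"
  assumes X: "X \<in> carrier_mat n k" and Y: "Y \<in> carrier_mat k n"
  shows "mtr (X * Y) = mtr (Y * X)"
proof -
  have "mtr (X * Y) = (\<Sum>i<n. \<Sum>j<k. X $$ (i,j) * Y $$ (j,i))"
    unfolding mtr_def using X Y by (auto simp: scalar_prod_def lessThan_atLeast0 intro!: sum.cong)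
  also have "\<dots> = (\<Sum>j<k. \<Sum>i<n. Y $$ (j,i) * X $$ (i,j))"
    by (subst sum.swap) (simp add: mult.commute)
  also have "\<dots> = mtr (Y * X)"
    unfolding mtr_def using X Y by (auto simp: scalar_prod_def lessThan_atLeast0 intro!: sum.cong)
  finally show ?thesis .
qed

lemma proots_linear_prod:
  "proots (\<Prod>a\<leftarrow>xs. [:- a, 1:]) = mset (xs :: complex list)"
proof (induction xs)
  case Nil
  then show ?case by simp
next
  case (Cons a xs)
  have nz: "(\<Prod>a\<leftarrow>xs. [:- a, 1:]) \<noteq> (0 :: complex poly)"
    by (auto simp: prod_list_zero_iff)
  have "proots (\<Prod>a\<leftarrow>a # xs. [:- a, 1:]) = proots [:- a, 1:] + proots (\<Prod>a\<leftarrow>xs. [:- a, 1:])"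
    using nz by (simp del: mult_pCons_left add: proots_mult)
  then show ?case using Cons by (simp del: mult_pCons_left add: proots_linear_factor)
qed

lemma energy_trace:
  fixes A :: "real mat"
  assumes A: "A \<in> carrier_mat n n" and sym: "transpose_mat A = A"
  shows "\<exists>S. S \<in> carrier_mat n n \<and> S * transpose_mat S = 1\<^sub>m n \<and> transpose_mat S = S \<and>
    (\<Sum>x\<in>#proots (char_poly (map_mat complex_of_real A)). cmod x) = (\<Sum>i<n. \<Sum>j<n. A $$ (i,j) * S $$ (j,i))"
proof -
  obtain Q D where Q: "Q \<in> carrier_mat n n" and D: "D \<in> carrier_mat n n" and Dd: "diagonal_mat D"
    and QtQ: "transpose_mat Q * Q = 1\<^sub>m n" and AQ: "A = Q * D * transpose_mat Q"
    using spectral_real[OF A sym] by blast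
  have QQt: "Q * transpose_mat Q = 1\<^sub>m n"
    by (rule mat_mult_left_right_inverse[OF _ Q QtQ]) (use Q in simp)
  have Dd': "\<And>i j. i < n \<Longrightarrow> j < n \<Longrightarrow> i \<noteq> j \<Longrightarrow> D $$ (i,j) = 0"
    using Dd D unfolding diagonal_mat_def by auto
  define Qc where "Qc = map_mat complex_of_real Q"
  define Qtc where "Qtc = map_mat complex_of_real (transpose_mat Q)"
  define Dc where "Dc = map_mat complex_of_real D"
  have Dc: "Dc \<in> carrier_mat n n" using D by (simp add: Dc_def)
  have "similar_mat_wit (map_mat complex_of_real A) Dc Qc Qtc"
    unfolding similar_mat_wit_def Let_def
  proof (intro conjI)
    show "{map_mat complex_of_real A, Dc, Qc, Qtc} \<subseteq> carrier_mat (dim_row (map_mat complex_of_real A)) (dim_row (map_mat complex_of_real A))"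
      using A D Q by (auto simp: Dc_def Qc_def Qtc_def)
    show "Qc * Qtc = 1\<^sub>m (dim_row (map_mat complex_of_real A))"
      unfolding Qc_def Qtc_def using Q A QQt
      by (simp add: of_real_hom.mat_hom_mult[symmetric, of _ n n _ n] of_real_hom.mat_hom_one)
    show "Qtc * Qc = 1\<^sub>m (dim_row (map_mat complex_of_real A))"
      unfolding Qc_def Qtc_def using Q A QtQ
      by (simp add: of_real_hom.mat_hom_mult[symmetric, of _ n n _ n] of_real_hom.mat_hom_one)
    show "map_mat complex_of_real A = Qc * Dc * Qtc"
      unfolding Qc_def Qtc_def Dc_def using Q D
      by (subst AQ) (simp add: of_real_hom.mat_hom_mult[of _ n n _ n])
  qed
  hence "similar_mat (map_mat complex_of_real A) Dc" unfolding similar_mat_def by blast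
  hence "char_poly (map_mat complex_of_real A) = char_poly Dc" by (rule char_poly_similar)
  also have "\<dots> = (\<Prod>a\<leftarrow>diag_mat Dc. [:- a, 1:])"
    by (rule char_poly_upper_triangular[OF Dc]) (use Dd' D in \<open>auto simp: upper_triangular_def Dc_def\<close>)
  finally have "proots (char_poly (map_mat complex_of_real A)) = mset (diag_mat Dc)"
    by (simp add: proots_linear_prod)
  hence E: "(\<Sum>x\<in>#proots (char_poly (map_mat complex_of_real A)). cmod x) = (\<Sum>i<n. \<bar>D $$ (i,i)\<bar>)"
    using D by (simp add: diag_mat_def Dc_def image_mset.compositionality
       sum_unfold_sum_mset[symmetric] lessThan_atLeast0 atLeast_upt)
  define G where "G = mat n n (\<lambda>(i,j). if i = j then (if D $$ (i,i) \<ge> 0 then 1 else -1) else (0::real))"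
  have G: "G \<in> carrier_mat n n" by (simp add: G_def)
  have Gt: "transpose_mat G = G" by (rule eq_matI) (auto simp: G_def)
  have GG: "G * G = 1\<^sub>m n"
  proof (rule eq_matI)
    fix i j assume i: "i < dim_row (1\<^sub>m n)" and j: "j < dim_col (1\<^sub>m n)"
    have "(G * G) $$ (i,j) = (\<Sum>k<n. G $$ (i,k) * G $$ (k,j))"
      using i j G by (auto simp: scalar_prod_def lessThan_atLeast0 intro!: sum.cong)
    also have "\<dots> = (\<Sum>k<n. if k = i then G $$ (i,i) * G $$ (i,j) else 0)"
      using i j by (intro sum.cong) (auto simp: G_def)
    also have "\<dots> = 1\<^sub>m n $$ (i,j)" using i j by (auto simp: G_def)
    finally show "(G * G) $$ (i,j) = 1\<^sub>m n $$ (i,j)" .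
  qed (use G in auto)
  define S where "S = Q * G * transpose_mat Q"
  have S: "S \<in> carrier_mat n n" using Q G by (simp add: S_def)
  have St: "transpose_mat S = S"
  proof -
    have "transpose_mat S = transpose_mat (transpose_mat Q) * transpose_mat (Q * G)"
      unfolding S_def using Q G by (subst transpose_mult[of _ n n]) auto
    also have "\<dots> = Q * (transpose_mat G * transpose_mat Q)"
      using Q G by (subst transpose_mult[of _ n n]) auto
    also have "\<dots> = S" unfolding S_def using Q G Gt by (simp add: assoc_mult_mat[of _ n n _ n _ n])
    finally show ?thesis .
  qed
  have SS: "S * transpose_mat S = 1\<^sub>m n"
  proof -
    have "S * transpose_mat S = Q * G * (transpose_mat Q * Q) * G * transpose_mat Q"
      unfolding St unfolding S_def using Q G by (simp add: assoc_mult_mat[of _ n n _ n _ n])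
    also have "\<dots> = Q * (G * G) * transpose_mat Q" using QtQ Q G by (simp add: assoc_mult_mat[of _ n n _ n _ n])
    also have "\<dots> = 1\<^sub>m n" using GG QQt Q by simp
    finally show ?thesis .
  qed
  have "(\<Sum>i<n. \<Sum>j<n. A $$ (i,j) * S $$ (j,i)) = mtr (A * S)"
    unfolding mtr_def using A S by (auto simp: scalar_prod_def lessThan_atLeast0 intro!: sum.cong)
  also have "mtr (A * S) = mtr (Q * (D * G * transpose_mat Q))"
  proof -
    have "transpose_mat Q * (Q * (G * transpose_mat Q)) = (transpose_mat Q * Q) * (G * transpose_mat Q)"
      using Q G by (subst assoc_mult_mat[of _ n n _ n _ n]) auto
    also have "\<dots> = G * transpose_mat Q" using QtQ Q G by simp
    finally have *: "transpose_mat Q * (Q * (G * transpose_mat Q)) = G * transpose_mat Q" .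
    have "A * S = Q * (D * (transpose_mat Q * (Q * (G * transpose_mat Q))))"
      unfolding AQ S_def using Q G D by (simp add: assoc_mult_mat[of _ n n _ n _ n])
    also have "\<dots> = Q * (D * (G * transpose_mat Q))" by (simp only: *)
    also have "\<dots> = Q * (D * G * transpose_mat Q)" using D G Q by (simp add: assoc_mult_mat[of _ n n _ n _ n])
    finally show ?thesis by simp
  qed
  also have "\<dots> = mtr (D * G * transpose_mat Q * Q)"
    using Q D G by (subst mtr_comm[of _ n n]) (auto simp: assoc_mult_mat[of _ n n _ n _ n])
  also have "\<dots> = mtr (D * G)" using Q D G QtQ by (simp add: assoc_mult_mat[of _ n n _ n _ n])
  also have "\<dots> = (\<Sum>i<n. D $$ (i,i) * G $$ (i,i))"
    unfolding mtr_def using D G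
  proof (simp, intro sum.cong refl)
    fix i assume i: "i \<in> {..<n}"
    have "row D i \<bullet> col G i = (\<Sum>k<n. D $$ (i,k) * G $$ (k,i))"
      using i D G by (auto simp: scalar_prod_def lessThan_atLeast0 intro!: sum.cong)
    also have "\<dots> = (\<Sum>k<n. if k = i then D $$ (i,i) * G $$ (i,i) else 0)"
      using i by (intro sum.cong) (auto simp: G_def)
    also have "\<dots> = D $$ (i,i) * G $$ (i,i)" using i by simp
    finally show "row D i \<bullet> col G i = D $$ (i,i) * G $$ (i,i)" .
  qed
  also have "\<dots> = (\<Sum>i<n. \<bar>D $$ (i,i)\<bar>)" by (intro sum.cong) (auto simp: G_def)
  finally have tr: "(\<Sum>i<n. \<Sum>j<n. A $$ (i,j) * S $$ (j,i)) = (\<Sum>i<n. \<bar>D $$ (i,i)\<bar>)" .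
  show ?thesis by (rule exI[of _ S]) (use E S SS St tr in simp)
qed



lemma sum_le_sqrt_card:
  fixes x :: "nat \<Rightarrow> real"
  assumes fin: "finite C" and sq: "(\<Sum>w\<in>C. (x w)^2) \<le> 1"
  shows "(\<Sum>w\<in>C. x w) \<le> sqrt (real (card C))"
proof (cases "C = {}")
  case True
  then show ?thesis by simp
next
  case False
  define k where "k = real (card C)"
  have kpos: "k > 0" using False fin by (simp add: k_def card_gt_0_iff)
  define t where "t = sqrt k / 2"
  have tpos: "t > 0" using kpos by (simp add: t_def)
  have each: "x w \<le> t * (x w)^2 + 1 / (4 * t)" for w
  proof -
    have "t * (x w)^2 + 1 / (4 * t) - x w = (2 * t * x w - 1)^2 / (4 * t)"
      using tpos by (simp add: field_simps power2_eq_square)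
    also have "\<dots> \<ge> 0" using tpos by simp
    finally show ?thesis by simp
  qed
  have "(\<Sum>w\<in>C. x w) \<le> (\<Sum>w\<in>C. t * (x w)^2 + 1 / (4 * t))"
    by (rule sum_mono) (rule each)
  also have "\<dots> = t * (\<Sum>w\<in>C. (x w)^2) + k / (4 * t)"
    by (simp add: sum.distrib sum_distrib_left k_def)
  also have "\<dots> \<le> t * 1 + k / (4 * t)"
    using sq tpos by (intro add_right_mono mult_left_mono) auto
  also have "\<dots> = sqrt k"
  proof -
    have "sqrt k * sqrt k = k" using kpos by simp
    thus ?thesis using kpos unfolding t_def by (simp add: field_simps)
  qed
  finally show ?thesis by (simp add: k_def)
qed

lemma tree_sum_bound:
  fixes S :: "nat \<Rightarrow> nat \<Rightarrow> real"
  assumes tree: "is_tree n E" and r: "r < n"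
    and Ssym: "\<And>i j. i < n \<Longrightarrow> j < n \<Longrightarrow> S i j = S j i"
    and Snorm: "\<And>c. c < n \<Longrightarrow> (\<Sum>j<n. (S c j)^2) \<le> 1"
  shows "(\<Sum>i<n. \<Sum>j<n. if E i j then S j i else 0)
           \<le> 2 * sqrt (real (degree_of n E r)) + (\<Sum>c\<in>{0..<n}-{r}. 2 * sqrt (real (degree_of n E c) - 1))"
    and "n \<ge> 3 \<Longrightarrow> \<exists>c<n. degree_of n E c \<ge> 2"
proof -
  have Ebd: "\<And>u v. E u v \<Longrightarrow> u < n \<and> v < n" and Esym: "\<And>u v. E u v \<Longrightarrow> E v u"
    and Eirr: "\<And>u. \<not> E u u"
    using tree unfolding is_tree_def simple_graph_def by blast+
  have conn: "\<And>v. v < n \<Longrightarrow> E\<^sup>*\<^sup>* r v" using tree r unfolding is_tree_def connected_graph_def by blast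
  have card_edges: "card (edge_set n E) = n - 1" using tree unfolding is_tree_def by blast
  define dep where "dep v = (LEAST k. (E ^^ k) r v)" for v
  have dep_reach: "(E ^^ dep v) r v" if "v < n" for v
  proof -
    from conn[OF that] obtain k where "(E ^^ k) r v" by (auto simp: rtranclp_power)
    thus ?thesis unfolding dep_def by (rule LeastI)
  qed
  have dep_le: "dep v \<le> k" if "(E ^^ k) r v" for v k
    unfolding dep_def using that by (rule Least_le)
  have par_ex: "\<exists>u. E u v \<and> dep u + 1 = dep v" if v: "v < n" "v \<noteq> r" for v
  proof (cases "dep v")
    case 0
    with dep_reach[OF v(1)] have "r = v" by (auto elim: relpowp_0_E)
    with v show ?thesis by simp
  next
    case (Suc k)
    with dep_reach[OF v(1)] have "(E ^^ Suc k) r v" by simp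
    then obtain u where u1: "(E ^^ k) r u" and u2: "E u v" by (rule relpowp_Suc_E)
    have "dep u \<le> k" by (rule dep_le[OF u1])
    moreover have "\<not> dep u < k"
    proof
      assume "dep u < k"
      have "(E ^^ Suc (dep u)) r v"
        by (rule relpowp_Suc_I[OF dep_reach u2]) (use Ebd u2 in auto)
      hence "dep v \<le> Suc (dep u)" by (rule dep_le)
      with \<open>dep u < k\<close> Suc show False by simp
    qed
    ultimately have "dep u = k" by simp
    with u2 Suc show ?thesis by auto
  qed
  define p where "p v = (SOME u. E u v \<and> dep u + 1 = dep v)" for v
  define V' where "V' = {0..<n} - {r}"
  have pE: "E (p v) v" and pdep: "dep (p v) + 1 = dep v" if "v \<in> V'" for v
    using someI_ex[OF par_ex, of v] that unfolding p_def V'_def by auto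
  have pn: "p v < n" if "v \<in> V'" for v using Ebd[OF pE[OF that]] by simp
  have finV': "finite V'" and cardV': "card V' = n - 1" using r by (auto simp: V'_def)
  define f where "f w = {w, p w}" for w
  have inj_f: "inj_on f V'"
  proof (rule inj_onI)
    fix a b assume a: "a \<in> V'" and b: "b \<in> V'" and fab: "f a = f b"
    show "a = b"
    proof (rule ccontr)
      assume "a \<noteq> b"
      with fab have ab: "a = p b" and ba: "b = p a" unfolding f_def by (auto simp: doubleton_eq_iff)
      have "dep b + 1 = dep a" using pdep[OF a] ba by simp
      moreover have "dep a + 1 = dep b" using pdep[OF b] ab by simp
      ultimately show False by simp
    qed
  qed
  have f_sub: "f ` V' \<subseteq> edge_set n E"
  proof
    fix e assume "e \<in> f ` V'"
    then obtain w where w: "w \<in> V'" and e: "e = f w" by blast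
    have "E (p w) w" by (rule pE[OF w])
    hence "{p w, w} \<in> edge_set n E" using Ebd unfolding edge_set_def by blast
    thus "e \<in> edge_set n E" unfolding e f_def by (simp add: insert_commute)
  qed
  have fin_edges: "finite (edge_set n E)"
  proof -
    have "edge_set n E \<subseteq> Pow {0..<n}" unfolding edge_set_def by auto
    thus ?thesis by (rule finite_subset) simp
  qed
  have f_eq: "f ` V' = edge_set n E"
    by (rule card_subset_eq[OF fin_edges f_sub]) (simp add: card_image[OF inj_f] cardV' card_edges)
  have key: "(\<exists>w\<in>V'. u = p w \<and> v = w) \<or> (\<exists>w\<in>V'. u = w \<and> v = p w)" if "E u v" for u v
  proof -
    have "{u, v} \<in> edge_set n E" using that Ebd unfolding edge_set_def by blast
    then obtain w where w: "w \<in> V'" and "{u, v} = {w, p w}" using f_eq unfolding f_def by blast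
    thus ?thesis by (auto simp: doubleton_eq_iff)
  qed
  define ch where "ch c = {w \<in> V'. p w = c}" for c
  have fin_ch: "finite (ch c)" for c using finV' unfolding ch_def by simp
  have no2: "\<not> (p w = c \<and> p c = w)" if "w \<in> V'" "c \<in> V'" for w c
  proof
    assume h: "p w = c \<and> p c = w"
    have "dep c + 1 = dep w" using pdep[OF that(1)] h by simp
    moreover have "dep w + 1 = dep c" using pdep[OF that(2)] h by simp
    ultimately show False by simp
  qed
  have deg_eq: "degree_of n E c = card (ch c) + (if c = r then 0 else 1)" if c: "c < n" for c
  proof -
    have N1: "u \<in> ch c \<union> (if c = r then {} else {p c})" if "u \<in> {u. u < n \<and> E c u}" for u
    proof -
      from that have "E c u" by simp
      from key[OF this] show "u \<in> ch c \<union> (if c = r then {} else {p c})"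
        by (auto simp: ch_def V'_def)
    qed
    have N2: "u \<in> {u. u < n \<and> E c u}" if u: "u \<in> ch c \<union> (if c = r then {} else {p c})" for u
    proof -
      show "u \<in> {u. u < n \<and> E c u}"
      proof (cases "u \<in> ch c")
        case True
        then show ?thesis using pE Ebd unfolding ch_def by blast
      next
        case False
        with u have cr: "c \<noteq> r" and up: "u = p c" by (auto split: if_splits)
        have cV: "c \<in> V'" using c cr by (simp add: V'_def)
        show ?thesis using pE[OF cV] Esym Ebd up by blast
      qed
    qed
    have N: "{u. u < n \<and> E c u} = ch c \<union> (if c = r then {} else {p c})"
      using N1 N2 by blast
    have disj: "ch c \<inter> (if c = r then {} else {p c}) = {}"
    proof (cases "c = r")
      case False
      have cV: "c \<in> V'" using c False by (simp add: V'_def)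
      have "p c \<notin> ch c" using no2[of "p c" c] cV unfolding ch_def by auto
      then show ?thesis using False by auto
    qed simp
    have "degree_of n E c = card (ch c \<union> (if c = r then {} else {p c}))"
      unfolding degree_of_def N ..
    also have "\<dots> = card (ch c) + card (if c = r then {} else {p c})"
      by (rule card_Un_disjoint) (use fin_ch disj in auto)
    finally show ?thesis by simp
  qed
  have sum_ch: "(\<Sum>c<n. g c (ch c)) = (\<Sum>c<n. g c {w \<in> V'. p w = c})" for g :: "nat \<Rightarrow> nat set \<Rightarrow> real"
    unfolding ch_def ..
  have group: "(\<Sum>w\<in>V'. h w) = (\<Sum>c<n. \<Sum>w\<in>ch c. h w)" for h :: "nat \<Rightarrow> 'b::comm_monoid_add"
    unfolding ch_def by (rule sum.group[symmetric]) (use finV' pn in auto)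
  show "n \<ge> 3 \<Longrightarrow> \<exists>c<n. degree_of n E c \<ge> 2"
  proof (rule ccontr)
    assume n3: "n \<ge> 3" and "\<not> (\<exists>c<n. degree_of n E c \<ge> 2)"
    hence le1: "\<And>c. c < n \<Longrightarrow> degree_of n E c \<le> 1" by force
    have "real (card V') = (\<Sum>w\<in>V'. 1)" by simp
    also have "\<dots> = (\<Sum>c<n. \<Sum>w\<in>ch c. 1)" by (rule group)
    also have "\<dots> = (\<Sum>c<n. real (card (ch c)))" by simp
    also have "\<dots> \<le> (\<Sum>c<n. if c = r then 1 else 0)"
    proof (rule sum_mono)
      fix c assume "c \<in> {..<n}"
      hence c: "c < n" by simp
      show "real (card (ch c)) \<le> (if c = r then 1 else 0)"
        using deg_eq[OF c] le1[OF c] by auto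
    qed
    also have "\<dots> = 1" using r by simp
    finally show False using cardV' n3 by simp
  qed
  have "(\<Sum>i<n. \<Sum>j<n. if E i j then S j i else 0) = (\<Sum>q\<in>{(i,j). i < n \<and> j < n \<and> E i j}. S (snd q) (fst q))"
  proof -
    have "(\<Sum>i<n. \<Sum>j<n. if E i j then S j i else 0) = (\<Sum>q\<in>{..<n} \<times> {..<n}. if E (fst q) (snd q) then S (snd q) (fst q) else 0)"
      by (simp add: sum.cartesian_product case_prod_beta)
    also have "\<dots> = (\<Sum>q\<in>{q \<in> {..<n} \<times> {..<n}. E (fst q) (snd q)}. S (snd q) (fst q))"
      by (simp add: sum.inter_filter)
    also have "{q \<in> {..<n} \<times> {..<n}. E (fst q) (snd q)} = {(i,j). i < n \<and> j < n \<and> E i j}" by auto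
    finally show ?thesis .
  qed
  also have "{(i,j). i < n \<and> j < n \<and> E i j} = (\<lambda>w. (p w, w)) ` V' \<union> (\<lambda>w. (w, p w)) ` V'"
  proof (rule Set.set_eqI, rule iffI)
    fix q assume "q \<in> {(i,j). i < n \<and> j < n \<and> E i j}"
    then obtain u v where q: "q = (u,v)" and "E u v" by blast
    from key[OF this(2)] show "q \<in> (\<lambda>w. (p w, w)) ` V' \<union> (\<lambda>w. (w, p w)) ` V'" using q by auto
  next
    fix q assume "q \<in> (\<lambda>w. (p w, w)) ` V' \<union> (\<lambda>w. (w, p w)) ` V'"
    then show "q \<in> {(i,j). i < n \<and> j < n \<and> E i j}" using pE Esym Ebd by blast
  qed
  also have "(\<Sum>q\<in>(\<lambda>w. (p w, w)) ` V' \<union> (\<lambda>w. (w, p w)) ` V'. S (snd q) (fst q))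
      = (\<Sum>q\<in>(\<lambda>w. (p w, w)) ` V'. S (snd q) (fst q)) + (\<Sum>q\<in>(\<lambda>w. (w, p w)) ` V'. S (snd q) (fst q))"
  proof (rule sum.union_disjoint)
    show "(\<lambda>w. (p w, w)) ` V' \<inter> (\<lambda>w. (w, p w)) ` V' = {}"
    proof (rule ccontr)
      assume "(\<lambda>w. (p w, w)) ` V' \<inter> (\<lambda>w. (w, p w)) ` V' \<noteq> {}"
      then obtain q where q1: "q \<in> (\<lambda>w. (p w, w)) ` V'" and q2: "q \<in> (\<lambda>w. (w, p w)) ` V'" by blast
      from q1 obtain a where a: "a \<in> V'" and qa: "q = (p a, a)" by (rule imageE)
      from q2 obtain b where b: "b \<in> V'" and qb: "q = (b, p b)" by (rule imageE)
      from qa qb have eq: "(p a, a) = (b, p b)" by (rule subst)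
      have e1: "p a = b" using eq[unfolded prod.inject] by (rule conjunct1)
      have e2': "a = p b" using eq[unfolded prod.inject] by (rule conjunct2)
      have e2: "p b = a" using e2' by (rule sym)
      have "p a = b \<and> p b = a" using e1 e2 by (rule conjI)
      with no2[OF a b] show False by (rule notE)
    qed
  qed (use finV' in auto)
  also have "\<dots> = (\<Sum>w\<in>V'. S w (p w)) + (\<Sum>w\<in>V'. S (p w) w)"
  proof -
    have i1: "inj_on (\<lambda>w. (p w, w)) V'" by (rule inj_onI) simp
    have i2: "inj_on (\<lambda>w. (w, p w)) V'" by (rule inj_onI) simp
    show ?thesis by (simp only: sum.reindex[OF i1] sum.reindex[OF i2] o_def fst_conv snd_conv)
  qed
  also have "\<dots> = 2 * (\<Sum>w\<in>V'. S (p w) w)"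
  proof -
    have "(\<Sum>w\<in>V'. S w (p w)) = (\<Sum>w\<in>V'. S (p w) w)"
    proof (rule sum.cong[OF refl])
      fix w assume w: "w \<in> V'"
      have "w < n" using w by (simp add: V'_def)
      thus "S w (p w) = S (p w) w" by (rule Ssym) (rule pn[OF w])
    qed
    thus ?thesis by simp
  qed
  also have "(\<Sum>w\<in>V'. S (p w) w) = (\<Sum>c<n. \<Sum>w\<in>ch c. S c w)"
    unfolding group by (intro sum.cong refl) (auto simp: ch_def)
  also have "2 * \<dots> \<le> 2 * (\<Sum>c<n. sqrt (real (card (ch c))))"
  proof -
    have "(\<Sum>w\<in>ch c. S c w) \<le> sqrt (real (card (ch c)))" if c: "c < n" for c
    proof (rule sum_le_sqrt_card[OF fin_ch])
      have "(\<Sum>w\<in>ch c. (S c w)^2) \<le> (\<Sum>w<n. (S c w)^2)"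
        by (rule sum_mono2) (use pn in \<open>auto simp: ch_def V'_def\<close>)
      also have "\<dots> \<le> 1" by (rule Snorm[OF c])
      finally show "(\<Sum>w\<in>ch c. (S c w)^2) \<le> 1" .
    qed
    thus ?thesis by (intro mult_left_mono sum_mono) auto
  qed
  also have "\<dots> = (\<Sum>c<n. 2 * sqrt (real (card (ch c))))" by (simp add: sum_distrib_left)
  also have "\<dots> = (\<Sum>c\<in>insert r V'. 2 * sqrt (real (card (ch c))))"
    using r by (intro sum.cong) (auto simp: V'_def)
  also have "\<dots> = 2 * sqrt (real (card (ch r))) + (\<Sum>c\<in>V'. 2 * sqrt (real (card (ch c))))"
    using finV' by (subst sum.insert) (auto simp: V'_def)
  also have "\<dots> = 2 * sqrt (real (degree_of n E r)) + (\<Sum>c\<in>{0..<n}-{r}. 2 * sqrt (real (degree_of n E c) - 1))"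
  proof -
    have "card (ch r) = degree_of n E r" using deg_eq[OF r] by simp
    moreover have "(\<Sum>c\<in>V'. 2 * sqrt (real (card (ch c)))) = (\<Sum>c\<in>{0..<n}-{r}. 2 * sqrt (real (degree_of n E c) - 1))"
      unfolding V'_def
    proof (rule sum.cong[OF refl])
      fix c assume "c \<in> {0..<n} - {r}"
      hence c: "c < n" "c \<noteq> r" by auto
      have "real (degree_of n E c) = real (card (ch c)) + 1" using deg_eq[OF c(1)] c(2) by simp
      thus "2 * sqrt (real (card (ch c))) = 2 * sqrt (real (degree_of n E c) - 1)" by simp
    qed
    ultimately show ?thesis by simp
  qed
  finally show "(\<Sum>i<n. \<Sum>j<n. if E i j then S j i else 0)
           \<le> 2 * sqrt (real (degree_of n E r)) + (\<Sum>c\<in>{0..<n}-{r}. 2 * sqrt (real (degree_of n E c) - 1))" .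
qed


lemma sqrt_step:
  fixes D :: real assumes "D \<ge> 2"
  shows "2 * sqrt D \<le> 2 * sqrt (D - 1) + 1"
proof -
  define x where "x = sqrt (D - 1)"
  have x1: "x \<ge> 1" using assms by (simp add: x_def)
  have xx: "x^2 = D - 1" using assms by (simp add: x_def)
  have "D \<le> (x + 1/2)^2" using xx x1 by (simp add: power2_eq_square algebra_simps)
  hence "sqrt D \<le> sqrt ((x + 1/2)^2)" by (rule real_sqrt_le_mono)
  also have "\<dots> = x + 1/2" using x1 by simp
  finally show ?thesis by (simp add: x_def)
qed

theorem theorem3p1:
  fixes n :: nat and E :: "nat \<Rightarrow> nat \<Rightarrow> bool" and \<sigma> :: "nat \<Rightarrow> nat" and d :: "nat \<Rightarrow> nat"
    and \<Delta> :: nat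
  assumes "n \<ge> 3"
    and "is_tree n E"
    and "bij_betw \<sigma> {1..n} {0..<n}"
    and "\<And>i. i \<in> {1..n} \<Longrightarrow> d i = degree_of n E (\<sigma> i)"
    and "\<And>i j. 1 \<le> i \<Longrightarrow> i \<le> j \<Longrightarrow> j \<le> n \<Longrightarrow> d j \<le> d i"
    and "\<Delta> = d 1"
  shows "graph_energy n E \<le> (\<Sum>i=2..n. 2 * sqrt (real (d i) - 1)) + 2 * sqrt (real \<Delta>)
         \<and> (\<Sum>i=2..n. 2 * sqrt (real (d i) - 1)) + 2 * sqrt (real \<Delta>)
           \<le> (\<Sum>i=1..n. 2 * sqrt (real (d i) - 1)) + 1"
proof -
  note n3 = assms(1) and tree = assms(2) and bij = assms(3) and dd = assms(4) and mono = assms(5)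
    and Dl = assms(6)
  have Ebd: "\<And>u v. E u v \<Longrightarrow> u < n \<and> v < n" and Esym: "\<And>u v. E u v \<Longrightarrow> E v u"
    using tree unfolding is_tree_def simple_graph_def by blast+
  define A where "A = adjacency_matrix n E"
  have A: "A \<in> carrier_mat n n" by (simp add: A_def adjacency_matrix_def)
  have Aidx: "\<And>i j. i < n \<Longrightarrow> j < n \<Longrightarrow> A $$ (i,j) = (if E i j then 1 else 0)"
    by (simp add: A_def adjacency_matrix_def)
  have Asym: "transpose_mat A = A"
    by (rule eq_matI) (use A Esym in \<open>auto simp: Aidx\<close>)
  obtain S where S: "S \<in> carrier_mat n n" and SS: "S * transpose_mat S = 1\<^sub>m n"
    and St: "transpose_mat S = S"
    and En: "(\<Sum>x\<in>#proots (char_poly (map_mat complex_of_real A)). cmod x) = (\<Sum>i<n. \<Sum>j<n. A $$ (i,j) * S $$ (j,i))"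
    using energy_trace[OF A Asym] by blast
  have GE: "graph_energy n E = (\<Sum>i<n. \<Sum>j<n. if E i j then S $$ (j,i) else 0)"
    unfolding graph_energy_def eigenvalues_mset_def A_def[symmetric] En
    by (intro sum.cong refl) (simp add: Aidx)
  have r: "\<sigma> 1 < n" using bij n3 unfolding bij_betw_def by auto
  have Ssym: "\<And>i j. i < n \<Longrightarrow> j < n \<Longrightarrow> S $$ (i,j) = S $$ (j,i)"
    using St S by (metis carrier_matD index_transpose_mat(1))
  have Snorm: "(\<Sum>j<n. (S $$ (c,j))^2) \<le> 1" if c: "c < n" for c
  proof -
    have "(S * transpose_mat S) $$ (c,c) = (\<Sum>j<n. (S $$ (c,j))^2)"
      using c S by (auto simp: scalar_prod_def lessThan_atLeast0 power2_eq_square intro!: sum.cong)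
    thus ?thesis using SS c by simp
  qed
  note TB = tree_sum_bound[OF tree r, of "\<lambda>i j. S $$ (i,j)", OF Ssym Snorm]
  define g where "g c = 2 * sqrt (real (degree_of n E c) - 1)" for c
  have reidx: "(\<Sum>i=1..n. g (\<sigma> i)) = (\<Sum>c\<in>{0..<n}. g c)"
    by (rule sum.reindex_bij_betw[OF bij])
  have s1: "(\<Sum>i=1..n. g (\<sigma> i)) = g (\<sigma> 1) + (\<Sum>i=2..n. g (\<sigma> i))"
  proof -
    have "{1..n} = insert 1 {2..n}" using n3 by auto
    thus ?thesis by simp
  qed
  have s2: "(\<Sum>c\<in>{0..<n}. g c) = g (\<sigma> 1) + (\<Sum>c\<in>{0..<n}-{\<sigma> 1}. g c)"
    using r by (subst sum.remove[of _ "\<sigma> 1"]) auto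
  have rest: "(\<Sum>c\<in>{0..<n}-{\<sigma> 1}. g c) = (\<Sum>i=2..n. 2 * sqrt (real (d i) - 1))"
  proof -
    have "(\<Sum>c\<in>{0..<n}-{\<sigma> 1}. g c) = (\<Sum>i=2..n. g (\<sigma> i))" using reidx s1 s2 by simp
    also have "\<dots> = (\<Sum>i=2..n. 2 * sqrt (real (d i) - 1))"
      by (intro sum.cong refl) (simp add: g_def dd)
    finally show ?thesis .
  qed
  have first: "graph_energy n E \<le> (\<Sum>i=2..n. 2 * sqrt (real (d i) - 1)) + 2 * sqrt (real \<Delta>)"
    using TB(1) rest unfolding GE g_def[symmetric] Dl
    using dd[of 1] n3 by simp
  obtain c where c: "c < n" and c2: "degree_of n E c \<ge> 2" using TB(2) n3 by blast
  obtain i where i: "i \<in> {1..n}" and ci: "c = \<sigma> i"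
    using bij c unfolding bij_betw_def by (metis atLeastLessThan_iff imageE zero_le)
  have "d i \<ge> 2" using c2 ci dd[OF i] by simp
  moreover have "d i \<le> d 1" using i mono[of 1 i] by auto
  ultimately have D2: "real \<Delta> \<ge> 2" using Dl by simp
  have s3: "(\<Sum>i=1..n. 2 * sqrt (real (d i) - 1)) = 2 * sqrt (real (d 1) - 1) + (\<Sum>i=2..n. 2 * sqrt (real (d i) - 1))"
  proof -
    have "{1..n} = insert 1 {2..n}" using n3 by auto
    thus ?thesis by simp
  qed
  have second: "(\<Sum>i=2..n. 2 * sqrt (real (d i) - 1)) + 2 * sqrt (real \<Delta>)
           \<le> (\<Sum>i=1..n. 2 * sqrt (real (d i) - 1)) + 1"
    using sqrt_step[OF D2] unfolding s3 Dl by simp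
  show ?thesis using first second by blast
qed

end
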